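(* Let $(x_n,y_n)_{n\in\mathbb Z}$ and $(x'_n,y'_n)_{n\in\mathbb Z}$ be two elliptic sequences in general position on the same biquadratic polynomial $F$, let $a\ne0$ and suppose $x'_0-x'_{-1}=2/a$. Let $f$ be defined on $\{x_n:n\ge0\}$ with $f(x_0)=c_0\ne0$ and $(\mathcal Df)(y_n)=a(\mathcal Mf)(y_n)$ for $n\ge0$, i.e. $f(x_{n+1})=\frac{1+a(x_{n+1}-x_n)/2}{1-a(x_{n+1}-x_n)/2}f(x_n)$ (assume $a(x_{n+1}-x_n)\ne2$). Let $(c_n)_{n\ge0}$ be the unique coefficients such that for every $N$ the sum $\sum_{n=0}^Nc_n\frac{(x-x_0)\cdots(x-x_{n-1})}{(x-x'_0)\cdots(x-x'_{n-1})}$ interpolates $f$ at $x_0,\dots,x_N$. Then for all $n\ge0$ $$c_n=\frac{x_n-x'_{n-1}}{x_0-x'_{-1}}\,\eta_0\eta_1\cdots\eta_{n-1}\,c_0,\qquad \eta_j=\frac{(x_j-x'_{-1})\big(1+a(x'_j-x'_{j-1})/2\big)}{(x'_j-x'_{-1})\big(1-a(x_{j+1}-x_j)/2\big)},$$ equivalently $\dfrac{c_{n+1}}{c_n}=\dfrac{(x_n-x'_{-1})(1+a(x'_n-x'_{n-1})/2)(x_{n+1}-x'_n)}{(x'_n-x'_{-1})(1-a(x_{n+1}-x_n)/2)(x_n-x'_{n-1})}$ for $n\ge1$.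
   Context: $F(x,y)=\sum_{i,j=0}^2c_{i,j}x^iy^j$ biquadratic. An elliptic sequence on $F$ is $(x_n,y_n)_{n\in\mathbb Z}$ such that for every $n$, $x_n,x_{n+1}$ are the two roots of $F(\cdot,y_n)$ and $y_{n-1},y_n$ the two roots of $F(x_n,\cdot)$; general position means all $x_n,x'_n$ distinct and all $y_n,y'_n$ distinct, with the leading coefficients $X_2(x)=\sum_ic_{i,2}x^i$, $Y_2(y)=\sum_jc_{2,j}y^j$ nonvanishing at these points. $(\mathcal Df)(y_n)=\frac{f(x_{n+1})-f(x_n)}{x_{n+1}-x_n}$, $(\mathcal Mf)(y_n)=\frac{f(x_n)+f(x_{n+1})}2$. Empty products equal $1$. *)

theory Defs
  imports Complex_Main
begin

definition biquad :: "(nat \<Rightarrow> nat \<Rightarrow> complex) \<Rightarrow> complex \<Rightarrow> complex \<Rightarrow> complex" where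
  "biquad C u v = (\<Sum>i\<le>2. \<Sum>j\<le>2. C i j * u ^ i * v ^ j)"

definition X2 :: "(nat \<Rightarrow> nat \<Rightarrow> complex) \<Rightarrow> complex \<Rightarrow> complex" where
  "X2 C u = (\<Sum>i\<le>2. C i 2 * u ^ i)"

definition Y2 :: "(nat \<Rightarrow> nat \<Rightarrow> complex) \<Rightarrow> complex \<Rightarrow> complex" where
  "Y2 C v = (\<Sum>j\<le>2. C 2 j * v ^ j)"

definition elliptic_seq :: "(nat \<Rightarrow> nat \<Rightarrow> complex) \<Rightarrow> (int \<Rightarrow> complex) \<Rightarrow> (int \<Rightarrow> complex) \<Rightarrow> bool" where
  "elliptic_seq C x y \<longleftrightarrow>
     (\<forall>n. (\<forall>t. biquad C t (y n) = Y2 C (y n) * (t - x n) * (t - x (n + 1))) \<and>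
          (\<forall>s. biquad C (x n) s = X2 C (x n) * (s - y (n - 1)) * (s - y n)))"

definition general_position ::
  "(nat \<Rightarrow> nat \<Rightarrow> complex) \<Rightarrow> (int \<Rightarrow> complex) \<Rightarrow> (int \<Rightarrow> complex) \<Rightarrow>
   (int \<Rightarrow> complex) \<Rightarrow> (int \<Rightarrow> complex) \<Rightarrow> bool" where
  "general_position C x y x' y' \<longleftrightarrow>
     inj x \<and> inj x' \<and> range x \<inter> range x' = {} \<and>
     inj y \<and> inj y' \<and> range y \<inter> range y' = {} \<and>
     (\<forall>n. X2 C (x n) \<noteq> 0 \<and> X2 C (x' n) \<noteq> 0 \<and> Y2 C (y n) \<noteq> 0 \<and> Y2 C (y' n) \<noteq> 0)"

text \<open>Divided difference and mean operators along (x,y), evaluated at y_n.\<close>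
definition Dop :: "(int \<Rightarrow> complex) \<Rightarrow> (complex \<Rightarrow> complex) \<Rightarrow> int \<Rightarrow> complex" where
  "Dop x f n = (f (x (n + 1)) - f (x n)) / (x (n + 1) - x n)"

definition Mop :: "(int \<Rightarrow> complex) \<Rightarrow> (complex \<Rightarrow> complex) \<Rightarrow> int \<Rightarrow> complex" where
  "Mop x f n = (f (x n) + f (x (n + 1))) / 2"

end

theory Submission
  imports Defs "HOL-Computational_Algebra.Polynomial"
begin

definition Yp :: "(nat \<Rightarrow> nat \<Rightarrow> complex) \<Rightarrow> nat \<Rightarrow> complex poly" where
  "Yp C k = [:C k 0, C k 1, C k 2:]"

lemma poly_Yp: "poly (Yp C k) v = C k 0 + C k 1 * v + C k 2 * v^2"
  by (simp add: Yp_def algebra_simps power2_eq_square)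

lemma Y2_eq: "Y2 C v = poly (Yp C 2) v"
  by (simp add: Y2_def poly_Yp numeral_2_eq_2 atMost_Suc)

lemma X2_eq: "X2 C u = C 0 2 + C 1 2 * u + C 2 2 * u^2"
  by (simp add: X2_def numeral_2_eq_2 atMost_Suc)

lemma biquad_eq: "biquad C t v = poly (Yp C 0) v + poly (Yp C 1) v * t + poly (Yp C 2) v * t^2"
  by (simp add: biquad_def poly_Yp numeral_2_eq_2 atMost_Suc algebra_simps)

lemma coeffs_from_fact:
  assumes "\<forall>t. biquad C t z = Y2 C z * (t - u) * (t - v)"
  shows "poly (Yp C 0) z = poly (Yp C 2) z * u * v"
    and "poly (Yp C 1) z = - poly (Yp C 2) z * (u + v)"
proof -
  have h0: "biquad C 0 z = Y2 C z * (0 - u) * (0 - v)" using assms by blast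
  have h1: "biquad C 1 z = Y2 C z * (1 - u) * (1 - v)" using assms by blast
  from h0 show "poly (Yp C 0) z = poly (Yp C 2) z * u * v"
    by (simp add: biquad_eq Y2_eq)
  then have "poly (Yp C 1) z + poly (Yp C 2) z * (u + v) = 0"
    using h1 by (simp add: biquad_eq Y2_eq algebra_simps)
  then have "poly (Yp C 1) z = - (poly (Yp C 2) z * (u + v))"
    by (simp add: eq_neg_iff_add_eq_0)
  then show "poly (Yp C 1) z = - poly (Yp C 2) z * (u + v)" by simp
qed

lemma alg1: fixes Y u v s t p q :: complex
 shows "(Y*u*v - (p+q)/2*Y*(u+v) + p*q*Y) * s - (p - q) * ((Y*u*v*Y - 1/4*(Y*(u+v))*(Y*(u+v))) * t) + ((Y*u*v - (p+q)/2*Y*(u+v) + p*q*Y) * t + (p - q) * s) * (Y*(v-u)/2) = (s + t*(Y*(v-u)/2)) * (Y*(u-q)*(v-p))"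
  by (simp add: field_simps power2_eq_square)

locale ctx =
  fixes C :: "nat \<Rightarrow> nat \<Rightarrow> complex"
    and x y x' y' :: "int \<Rightarrow> complex"
    and a :: complex
  assumes ell: "elliptic_seq C x y" and ell': "elliptic_seq C x' y'"
    and gp: "general_position C x y x' y'"
    and a_nz: "a \<noteq> 0"
    and step': "x' 0 - x' (-1) = 2 / a"
    and ne2: "\<And>n::nat. a * (x (int n + 1) - x (int n)) \<noteq> 2"
begin

lemma ellx: "biquad C t (y m) = Y2 C (y m) * (t - x m) * (t - x (m + 1))"
  using ell unfolding elliptic_seq_def by blast
lemma elly: "biquad C (x n) s = X2 C (x n) * (s - y (n - 1)) * (s - y n)"
  using ell unfolding elliptic_seq_def by blast
lemma ellx': "biquad C t (y' m) = Y2 C (y' m) * (t - x' m) * (t - x' (m + 1))"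
  using ell' unfolding elliptic_seq_def by blast
lemma elly': "biquad C (x' n) s = X2 C (x' n) * (s - y' (n - 1)) * (s - y' n)"
  using ell' unfolding elliptic_seq_def by blast

lemma gpx: "inj x" "inj x'" "inj y" "inj y'" "range x \<inter> range x' = {}" "range y \<inter> range y' = {}"
  "\<And>n. X2 C (x n) \<noteq> 0" "\<And>n. X2 C (x' n) \<noteq> 0" "\<And>n. Y2 C (y n) \<noteq> 0" "\<And>n. Y2 C (y' n) \<noteq> 0"
  using gp unfolding general_position_def by auto

lemma injx: "x i = x j \<longleftrightarrow> i = j" using gpx(1) by (auto dest: injD)
lemma injx': "x' i = x' j \<longleftrightarrow> i = j" using gpx(2) by (auto dest: injD)
lemma injy: "y i = y j \<longleftrightarrow> i = j" using gpx(3) by (auto dest: injD)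
lemma injy': "y' i = y' j \<longleftrightarrow> i = j" using gpx(4) by (auto dest: injD)
lemma dxx': "x i \<noteq> x' j" using gpx(5) by (metis disjoint_iff rangeI)
lemma dyy': "y i \<noteq> y' j" using gpx(6) by (metis disjoint_iff rangeI)
lemma X2x: "X2 C (x n) \<noteq> 0" using gpx(7) by blast
lemma X2x': "X2 C (x' n) \<noteq> 0" using gpx(8) by blast
lemma Y2y: "poly (Yp C 2) (y n) \<noteq> 0" using gpx(9) unfolding Y2_eq by blast
lemma Y2y': "poly (Yp C 2) (y' n) \<noteq> 0" using gpx(10) unfolding Y2_eq by blast

lemma cy0: "poly (Yp C 0) (y m) = poly (Yp C 2) (y m) * x m * x (m+1)"
  using coeffs_from_fact(1)[of C "y m" "x m" "x (m+1)"] ellx by blast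
lemma cy1: "poly (Yp C 1) (y m) = - poly (Yp C 2) (y m) * (x m + x (m+1))"
  using coeffs_from_fact(2)[of C "y m" "x m" "x (m+1)"] ellx by blast
lemma cy0': "poly (Yp C 0) (y' m) = poly (Yp C 2) (y' m) * x' m * x' (m+1)"
  using coeffs_from_fact(1)[of C "y' m" "x' m" "x' (m+1)"] ellx' by blast
lemma cy1': "poly (Yp C 1) (y' m) = - poly (Yp C 2) (y' m) * (x' m + x' (m+1))"
  using coeffs_from_fact(2)[of C "y' m" "x' m" "x' (m+1)"] ellx' by blast

definition Bp :: "nat \<Rightarrow> complex poly" where
  "Bp n = Yp C 0 + smult ((x (int n) + x' (int n)) / 2) (Yp C 1) + smult (x (int n) * x' (int n)) (Yp C 2)"

definition Dl :: "complex poly" where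
  "Dl = Yp C 0 * Yp C 2 - smult (1/4) (Yp C 1 * Yp C 1)"

primrec TS :: "nat \<Rightarrow> complex poly \<times> complex poly" where
  "TS 0 = (0, 1)"
| "TS (Suc n) = (Bp n * fst (TS n) + smult (x (int n) - x' (int n)) (snd (TS n)),
                 Bp n * snd (TS n) - smult (x (int n) - x' (int n)) (Dl * fst (TS n)))"

definition tau where "tau n = fst (TS n)"
definition Sp where "Sp n = snd (TS n)"
definition Phi where "Phi n = Yp C 2 * tau n - smult a (Sp n)"

lemma tau_Suc: "tau (Suc n) = Bp n * tau n + smult (x (int n) - x' (int n)) (Sp n)"
  by (simp add: tau_def Sp_def)
lemma Sp_Suc: "Sp (Suc n) = Bp n * Sp n - smult (x (int n) - x' (int n)) (Dl * tau n)"
  by (simp add: tau_def Sp_def)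
lemma tau_0: "tau 0 = 0" by (simp add: tau_def)
lemma Sp_0: "Sp 0 = 1" by (simp add: Sp_def)

lemma eval_prod:
  assumes h0: "poly (Yp C 0) z = poly (Yp C 2) z * u * v"
      and h1: "poly (Yp C 1) z = - poly (Yp C 2) z * (u + v)"
  shows "poly (Sp n) z + poly (tau n) z * (poly (Yp C 2) z * (v - u) / 2) =
         (\<Prod>i<n. poly (Yp C 2) z * (u - x' (int i)) * (v - x (int i)))"
proof (induction n)
  case 0
  then show ?case by (simp add: tau_0 Sp_0)
next
  case (Suc n)
  define Y where "Y = poly (Yp C 2) z"
  define s where "s = poly (Sp n) z"
  define t where "t = poly (tau n) z"
  define p where "p = x (int n)"
  define q where "q = x' (int n)"
  have B: "poly (Bp n) z = Y * u * v - (p + q) / 2 * Y * (u + v) + p * q * Y"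
    unfolding Bp_def using h0 h1 by (simp add: Y_def p_def q_def)
  have D: "poly Dl z = Y * u * v * Y - 1/4 * (Y * (u + v)) * (Y * (u + v))"
    unfolding Dl_def using h0 h1 by (simp add: Y_def)
  have "poly (Sp (Suc n)) z + poly (tau (Suc n)) z * (Y * (v - u) / 2)
      = poly (Bp n) z * s - (p - q) * (poly Dl z * t) + (poly (Bp n) z * t + (p - q) * s) * (Y * (v - u) / 2)"
    by (simp add: Sp_Suc tau_Suc s_def t_def p_def q_def)
  also have "\<dots> = (s + t * (Y * (v - u) / 2)) * (Y * (u - q) * (v - p))"
    unfolding B D by (rule alg1)
  finally show ?case using Suc.IH by (simp add: Y_def s_def t_def p_def q_def mult.commute)
qed

end

lemma deg_Yp: "degree (Yp C k) \<le> 2"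
  unfolding Yp_def by (auto simp: degree_pCons_eq_if)

context ctx
begin

lemma deg_Bp: "degree (Bp n) \<le> 2"
  unfolding Bp_def
  by (intro degree_add_le order_trans[OF degree_smult_le] deg_Yp)

lemma deg_Dl: "degree Dl \<le> 4"
proof -
  have "degree (Yp C 0 * Yp C 2) \<le> 4"
    using degree_mult_le[of "Yp C 0" "Yp C 2"] deg_Yp[of C 0] deg_Yp[of C 2] by linarith
  moreover have "degree (smult (1/4) (Yp C 1 * Yp C 1)) \<le> 4"
    using degree_mult_le[of "Yp C 1" "Yp C 1"] deg_Yp[of C 1] degree_smult_le[of "1/4" "Yp C 1 * Yp C 1"] by linarith
  ultimately show ?thesis unfolding Dl_def by (intro degree_diff_le)
qed

lemma deg_mult2: "degree p \<le> 2 \<Longrightarrow> degree q \<le> m \<Longrightarrow> degree (p * q) \<le> m + 2"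
  using degree_mult_le[of p q] by linarith

lemma deg_TS: "degree (tau (Suc n)) \<le> 2*n \<and> degree (Sp (Suc n)) \<le> 2*n + 2"
proof (induction n)
  case 0
  have "tau (Suc 0) = [:x 0 - x' 0:]" by (simp add: tau_Suc tau_0 Sp_0)
  moreover have "Sp (Suc 0) = Bp 0" by (simp add: Sp_Suc tau_0 Sp_0)
  ultimately show ?case using deg_Bp[of 0] by simp
next
  case (Suc n)
  let ?q = "x (int (Suc n)) - x' (int (Suc n))"
  have t1: "degree (Bp (Suc n) * tau (Suc n)) \<le> 2 * Suc n"
    using deg_mult2[OF deg_Bp, of "tau (Suc n)" "2*n"] Suc.IH by simp
  have t2: "degree (smult ?q (Sp (Suc n))) \<le> 2 * Suc n"
    using degree_smult_le[of ?q "Sp (Suc n)"] Suc.IH by simp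
  have s1: "degree (Bp (Suc n) * Sp (Suc n)) \<le> 2 * Suc n + 2"
    using deg_mult2[OF deg_Bp, of "Sp (Suc n)" "2*n+2"] Suc.IH by simp
  have s2: "degree (Dl * tau (Suc n)) \<le> 2 * Suc n + 2"
    using degree_mult_le[of Dl "tau (Suc n)"] deg_Dl Suc.IH by simp
  have s3: "degree (smult ?q (Dl * tau (Suc n))) \<le> 2 * Suc n + 2"
    using degree_smult_le[of ?q "Dl * tau (Suc n)"] s2 by simp
  show ?case
    unfolding tau_Suc[of "Suc n"] Sp_Suc[of "Suc n"]
    using t1 t2 s1 s3 by (auto intro!: degree_add_le degree_diff_le)
qed

lemma deg_Phi: "degree (Phi (Suc n)) \<le> 2*n + 2"
proof -
  have "degree (Yp C 2 * tau (Suc n)) \<le> 2*n + 2"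
    using degree_mult_le[of "Yp C 2" "tau (Suc n)"] deg_Yp[of C 2] deg_TS[of n] by linarith
  moreover have "degree (smult a (Sp (Suc n))) \<le> 2*n+2"
    using degree_smult_le[of a "Sp (Suc n)"] deg_TS[of n] by linarith
  ultimately show ?thesis unfolding Phi_def by (intro degree_diff_le)
qed

lemma ev_y:
  "poly (Sp n) (y m) + poly (tau n) (y m) * (poly (Yp C 2) (y m) * (x (m+1) - x m) / 2) =
   (\<Prod>i<n. poly (Yp C 2) (y m) * (x m - x' (int i)) * (x (m+1) - x (int i)))"
  by (rule eval_prod[OF cy0 cy1])

lemma ev_y_sw:
  "poly (Sp n) (y m) - poly (tau n) (y m) * (poly (Yp C 2) (y m) * (x (m+1) - x m) / 2) =
   (\<Prod>i<n. poly (Yp C 2) (y m) * (x (m+1) - x' (int i)) * (x m - x (int i)))"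
proof -
  have h0: "poly (Yp C 0) (y m) = poly (Yp C 2) (y m) * x (m+1) * x m" using cy0[of m] by (simp add: mult_ac)
  have h1: "poly (Yp C 1) (y m) = - poly (Yp C 2) (y m) * (x (m+1) + x m)" using cy1[of m] by (simp add: add_ac)
  have "poly (Sp n) (y m) + poly (tau n) (y m) * (poly (Yp C 2) (y m) * (x m - x (m+1)) / 2) =
   (\<Prod>i<n. poly (Yp C 2) (y m) * (x (m+1) - x' (int i)) * (x m - x (int i)))"
    by (rule eval_prod[OF h0 h1])
  moreover have "poly (tau n) (y m) * (poly (Yp C 2) (y m) * (x m - x (m+1)) / 2) =
     - (poly (tau n) (y m) * (poly (Yp C 2) (y m) * (x (m+1) - x m) / 2))"
    by (simp add: field_simps)
  ultimately show ?thesis by simp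
qed

lemma ev_y':
  "poly (Sp n) (y' m) + poly (tau n) (y' m) * (poly (Yp C 2) (y' m) * (x' (m+1) - x' m) / 2) =
   (\<Prod>i<n. poly (Yp C 2) (y' m) * (x' m - x' (int i)) * (x' (m+1) - x (int i)))"
  by (rule eval_prod[OF cy0' cy1'])

lemma ev_y'_sw:
  "poly (Sp n) (y' m) - poly (tau n) (y' m) * (poly (Yp C 2) (y' m) * (x' (m+1) - x' m) / 2) =
   (\<Prod>i<n. poly (Yp C 2) (y' m) * (x' (m+1) - x' (int i)) * (x' m - x (int i)))"
proof -
  have h0: "poly (Yp C 0) (y' m) = poly (Yp C 2) (y' m) * x' (m+1) * x' m" using cy0'[of m] by (simp add: mult_ac)
  have h1: "poly (Yp C 1) (y' m) = - poly (Yp C 2) (y' m) * (x' (m+1) + x' m)" using cy1'[of m] by (simp add: add_ac)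
  have "poly (Sp n) (y' m) + poly (tau n) (y' m) * (poly (Yp C 2) (y' m) * (x' m - x' (m+1)) / 2) =
   (\<Prod>i<n. poly (Yp C 2) (y' m) * (x' (m+1) - x' (int i)) * (x' m - x (int i)))"
    by (rule eval_prod[OF h0 h1])
  moreover have "poly (tau n) (y' m) * (poly (Yp C 2) (y' m) * (x' m - x' (m+1)) / 2) =
     - (poly (tau n) (y' m) * (poly (Yp C 2) (y' m) * (x' (m+1) - x' m) / 2))"
    by (simp add: field_simps)
  ultimately show ?thesis by simp
qed

lemma prod_zero_at: "finite A \<Longrightarrow> i \<in> A \<Longrightarrow> f i = (0::complex) \<Longrightarrow> prod f A = 0"
  by (metis prod_zero)

lemma both_zero: fixes s t w :: complex
  assumes "s + t * w = 0" "s - t * w = 0" "w \<noteq> 0" shows "s = 0" "t = 0"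
proof -
  from assms(1,2) have "2 * (t * w) = 0" by (simp add: algebra_simps)
  then show "t = 0" using assms(3) by simp
  then show "s = 0" using assms(1) by simp
qed

lemma zeros_y:
  assumes "Suc j < n"
  shows "poly (tau n) (y (int j)) = 0" "poly (Sp n) (y (int j)) = 0"
proof -
  let ?w = "poly (Yp C 2) (y (int j)) * (x (int j + 1) - x (int j)) / 2"
  have w: "?w \<noteq> 0" using Y2y[of "int j"] injx[of "int j + 1" "int j"] by simp
  have "(\<Prod>i<n. poly (Yp C 2) (y (int j)) * (x (int j) - x' (int i)) * (x (int j + 1) - x (int i))) = 0"
    using assms by (intro prod_zero_at[of _ "Suc j"]) (auto simp: add.commute)
  then have e1: "poly (Sp n) (y (int j)) + poly (tau n) (y (int j)) * ?w = 0" using ev_y[of n "int j"] by simp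
  have "(\<Prod>i<n. poly (Yp C 2) (y (int j)) * (x (int j + 1) - x' (int i)) * (x (int j) - x (int i))) = 0"
    using assms by (intro prod_zero_at[of _ j]) (auto simp: add.commute)
  then have e2: "poly (Sp n) (y (int j)) - poly (tau n) (y (int j)) * ?w = 0" using ev_y_sw[of n "int j"] by simp
  show "poly (tau n) (y (int j)) = 0" "poly (Sp n) (y (int j)) = 0" using both_zero[OF e1 e2 w] by auto
qed

lemma zeros_y':
  assumes "Suc j < n"
  shows "poly (tau n) (y' (int j)) = 0" "poly (Sp n) (y' (int j)) = 0"
proof -
  let ?w = "poly (Yp C 2) (y' (int j)) * (x' (int j + 1) - x' (int j)) / 2"
  have w: "?w \<noteq> 0" using Y2y'[of "int j"] injx'[of "int j + 1" "int j"] by simp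
  have "(\<Prod>i<n. poly (Yp C 2) (y' (int j)) * (x' (int j) - x' (int i)) * (x' (int j + 1) - x (int i))) = 0"
    using assms by (intro prod_zero_at[of _ j]) (auto simp: add.commute)
  then have e1: "poly (Sp n) (y' (int j)) + poly (tau n) (y' (int j)) * ?w = 0" using ev_y'[of n "int j"] by simp
  have "(\<Prod>i<n. poly (Yp C 2) (y' (int j)) * (x' (int j + 1) - x' (int i)) * (x' (int j) - x (int i))) = 0"
    using assms by (intro prod_zero_at[of _ "Suc j"]) (auto simp: add.commute)
  then have e2: "poly (Sp n) (y' (int j)) - poly (tau n) (y' (int j)) * ?w = 0" using ev_y'_sw[of n "int j"] by simp
  show "poly (tau n) (y' (int j)) = 0" "poly (Sp n) (y' (int j)) = 0" using both_zero[OF e1 e2 w] by auto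
qed

lemma Bw:
  assumes h0: "poly (Yp C 0) z = poly (Yp C 2) z * u * v"
      and h1: "poly (Yp C 1) z = - poly (Yp C 2) z * (u + v)"
  shows "poly (Bp n) z + (x (int n) - x' (int n)) * (poly (Yp C 2) z * (v - u) / 2) =
         poly (Yp C 2) z * (u - x' (int n)) * (v - x (int n))"
proof -
  define Y where "Y = poly (Yp C 2) z"
  define p where "p = x (int n)"
  define q where "q = x' (int n)"
  have B: "poly (Bp n) z = Y * u * v - (p + q) / 2 * Y * (u + v) + p * q * Y"
    unfolding Bp_def using h0 h1 by (simp add: Y_def p_def q_def)
  have "Y * u * v - (p + q) / 2 * Y * (u + v) + p * q * Y + (p - q) * (Y * (v - u) / 2) = Y * (u - q) * (v - p)"
    by (simp add: field_simps)
  then show ?thesis using B by (simp add: Y_def p_def q_def)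
qed

lemma Sp_ym1:
  "poly (Sp (Suc k)) (y' (-1)) = poly (tau (Suc k)) (y' (-1)) * (poly (Yp C 2) (y' (-1)) * (x' 0 - x' (-1)) / 2)"
proof -
  have P0: "(\<Prod>i<Suc k. poly (Yp C 2) (y' (-1)) * (x' (-1 + 1) - x' (int i)) * (x' (-1) - x (int i))) = 0"
    by (intro prod_zero_at[of _ 0]) auto
  have "poly (Sp (Suc k)) (y' (-1)) - poly (tau (Suc k)) (y' (-1)) * (poly (Yp C 2) (y' (-1)) * (x' (-1 + 1) - x' (-1)) / 2) = 0"
    using ev_y'_sw[of "Suc k" "-1", unfolded P0] .
  then show ?thesis by simp
qed

lemma Phi_ym1: "poly (Phi (Suc k)) (y' (-1)) = 0"
  using Sp_ym1[of k, unfolded step'] a_nz unfolding Phi_def by (simp add: field_simps)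

lemma V1: "poly (Phi (Suc k)) (y (int k)) =
   poly (tau (Suc k)) (y (int k)) * poly (Yp C 2) (y (int k)) * (1 - a * (x (int k + 1) - x (int k)) / 2)"
proof -
  have P0: "(\<Prod>i<Suc k. poly (Yp C 2) (y (int k)) * (x (int k + 1) - x' (int i)) * (x (int k) - x (int i))) = 0"
    by (intro prod_zero_at[of _ k]) auto
  have "poly (Sp (Suc k)) (y (int k)) - poly (tau (Suc k)) (y (int k)) * (poly (Yp C 2) (y (int k)) * (x (int k + 1) - x (int k)) / 2) = 0"
    using ev_y_sw[of "Suc k" "int k", unfolded P0] .
  then have S: "poly (Sp (Suc k)) (y (int k)) = poly (tau (Suc k)) (y (int k)) * (poly (Yp C 2) (y (int k)) * (x (int k + 1) - x (int k)) / 2)"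
    by simp
  show ?thesis unfolding Phi_def poly_diff poly_mult poly_smult S by (simp add: field_simps)
qed

lemma V2: "poly (Phi (Suc k)) (y' (int k)) =
   poly (tau (Suc k)) (y' (int k)) * poly (Yp C 2) (y' (int k)) * (1 + a * (x' (int k + 1) - x' (int k)) / 2)"
proof -
  have P0: "(\<Prod>i<Suc k. poly (Yp C 2) (y' (int k)) * (x' (int k) - x' (int i)) * (x' (int k + 1) - x (int i))) = 0"
    by (intro prod_zero_at[of _ k]) auto
  have "poly (Sp (Suc k)) (y' (int k)) + poly (tau (Suc k)) (y' (int k)) * (poly (Yp C 2) (y' (int k)) * (x' (int k + 1) - x' (int k)) / 2) = 0"
    using ev_y'[of "Suc k" "int k", unfolded P0] .
  then have S: "poly (Sp (Suc k)) (y' (int k)) = - (poly (tau (Suc k)) (y' (int k)) * (poly (Yp C 2) (y' (int k)) * (x' (int k + 1) - x' (int k)) / 2))"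
    by (simp add: eq_neg_iff_add_eq_0)
  show ?thesis unfolding Phi_def poly_diff poly_mult poly_smult S by (simp add: field_simps)
qed

lemma V3: "poly (tau (Suc (Suc k))) (y' (-1)) =
   poly (tau (Suc k)) (y' (-1)) * (poly (Yp C 2) (y' (-1)) * (x' (-1) - x' (int (Suc k))) * (x' 0 - x (int (Suc k))))"
proof -
  have h0: "poly (Yp C 0) (y' (-1)) = poly (Yp C 2) (y' (-1)) * x' (-1) * x' 0" using cy0'[of "-1"] by simp
  have h1: "poly (Yp C 1) (y' (-1)) = - poly (Yp C 2) (y' (-1)) * (x' (-1) + x' 0)" using cy1'[of "-1"] by simp
  have "poly (tau (Suc (Suc k))) (y' (-1)) = poly (tau (Suc k)) (y' (-1)) *
     (poly (Bp (Suc k)) (y' (-1)) + (x (int (Suc k)) - x' (int (Suc k))) * (poly (Yp C 2) (y' (-1)) * (x' 0 - x' (-1)) / 2))"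
    unfolding tau_Suc[of "Suc k"] poly_add poly_mult poly_smult Sp_ym1[of k] by (simp add: algebra_simps)
  also have "\<dots> = poly (tau (Suc k)) (y' (-1)) * (poly (Yp C 2) (y' (-1)) * (x' (-1) - x' (int (Suc k))) * (x' 0 - x (int (Suc k))))"
    using Bw[OF h0 h1, of "Suc k"] by simp
  finally show ?thesis .
qed

end

lemma cancel_mid: fixes P A B k1 k0 :: complex
  assumes "P \<noteq> 0" "k1 * (P * A) = k0 * P * B" shows "k1 * A = k0 * B"
proof -
  have "P * (k1 * A) = P * (k0 * B)" using assms(2) by (simp add: mult_ac)
  then show ?thesis using assms(1) by simp
qed

lemma fact_lemma:
  fixes r s :: "nat \<Rightarrow> complex"
  assumes ri: "\<And>i j. r i = r j \<Longrightarrow> i = j" and si: "\<And>i j. s i = s j \<Longrightarrow> i = j"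
      and rs: "\<And>i j. r i \<noteq> s j"
  shows "(\<forall>i<k. poly p (r i) = 0 \<and> poly p (s i) = 0) \<Longrightarrow> degree p \<le> 2*k + e \<Longrightarrow>
         \<exists>q. degree q \<le> e \<and> p = q * (\<Prod>i<k. [:-r i, 1:] * [:-s i, 1:])"
proof (induction k arbitrary: p)
  case 0
  then show ?case by auto
next
  case (Suc k)
  show ?case
  proof (cases "p = 0")
    case True
    then show ?thesis by (intro exI[of _ 0]) auto
  next
    case False
    have "poly p (r k) = 0" using Suc.prems by auto
    then obtain p1 where p1: "p = [:-r k, 1:] * p1" using poly_eq_0_iff_dvd by (metis dvdE)
    have "poly p (s k) = 0" using Suc.prems by auto
    then have "poly p1 (s k) = 0" using p1 rs[of k k] by simp
    then obtain p2 where p2: "p1 = [:-s k, 1:] * p2" using poly_eq_0_iff_dvd by (metis dvdE)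
    have pp: "p = [:-r k, 1:] * ([:-s k, 1:] * p2)" using p1 p2 by (simp only:)
    have p2nz: "p2 \<noteq> 0" using False pp by auto
    have lnz: "[:-c, 1:] \<noteq> (0::complex poly)" for c by simp
    have nz: "[:-s k, 1:] * p2 \<noteq> 0" using p2nz lnz by (metis mult_eq_0_iff)
    have d1: "degree ([:-s k, 1:] * p2) = 1 + degree p2"
      using degree_mult_eq[OF lnz p2nz, of "s k"] by simp
    have d2: "degree ([:-r k, 1:] * ([:-s k, 1:] * p2)) = 1 + degree ([:-s k, 1:] * p2)"
      using degree_mult_eq[OF lnz nz, of "r k"] by simp
    have "degree p = 2 + degree p2" using pp d1 d2 by simp
    then have dp2: "degree p2 \<le> 2*k + e" using Suc.prems by simp
    have z2: "\<forall>i<k. poly p2 (r i) = 0 \<and> poly p2 (s i) = 0"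
    proof (intro allI impI conjI)
      fix i assume i: "i < k"
      have "poly p (r i) = 0" "poly p (s i) = 0" using Suc.prems i by auto
      moreover have "r i \<noteq> r k" "s i \<noteq> s k" using i ri si by (metis less_irrefl)+
      moreover have "r i \<noteq> s k" "s i \<noteq> r k" using rs by metis+
      ultimately show "poly p2 (r i) = 0" "poly p2 (s i) = 0" using pp by auto
    qed
    obtain q where q: "degree q \<le> e" "p2 = q * (\<Prod>i<k. [:-r i, 1:] * [:-s i, 1:])"
      using Suc.IH[OF z2 dp2] by blast
    have "p = q * ((\<Prod>i<k. [:-r i, 1:] * [:-s i, 1:]) * ([:-r k, 1:] * [:-s k, 1:]))"
      using q(2) pp by (simp only: mult_ac)
    then show ?thesis using q(1) by (intro exI[of _ q]) (simp only: prod.lessThan_Suc)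
  qed
qed

lemma poly_deg1: fixes q :: "complex poly" assumes "degree q \<le> 1" shows "poly q z = coeff q 0 + coeff q 1 * z"
proof -
  have "poly q z = (\<Sum>i\<le>degree q. coeff q i * z^i)" by (rule poly_altdef)
  also have "\<dots> = (\<Sum>i\<le>1. coeff q i * z^i)"
    using assms by (intro sum.mono_neutral_left) (auto simp: coeff_eq_0)
  finally show ?thesis by simp
qed

context ctx
begin

definition Pi :: "nat \<Rightarrow> complex poly" where
  "Pi k = (\<Prod>i<k. [:-y (int i), 1:] * [:-y' (int i), 1:])"

lemma poly_Pi: "poly (Pi k) z = (\<Prod>i<k. (z - y (int i)) * (z - y' (int i)))"
  unfolding Pi_def poly_prod poly_mult by (intro prod.cong refl) (simp add: algebra_simps)

lemma Pi_Suc: "poly (Pi (Suc k)) z = poly (Pi k) z * ((z - y (int k)) * (z - y' (int k)))"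
  unfolding poly_Pi by simp

lemma Pi_nz_y: "j \<ge> k \<Longrightarrow> poly (Pi k) (y (int j)) \<noteq> 0"
  unfolding poly_Pi using dyy' by (auto simp: injy)

lemma Pi_nz_y': "j \<ge> k \<Longrightarrow> poly (Pi k) (y' (int j)) \<noteq> 0"
  unfolding poly_Pi using dyy' by (auto simp: injy' dest: sym)

lemma Pi_nz_m1: "poly (Pi k) (y' (-1)) \<noteq> 0"
  unfolding poly_Pi using dyy' by (auto simp: injy' dest: sym)

lemma fact_inst:
  "(\<forall>i<k. poly p (y (int i)) = 0 \<and> poly p (y' (int i)) = 0) \<Longrightarrow> degree p \<le> 2*k + e \<Longrightarrow>
         \<exists>q. degree q \<le> e \<and> p = q * Pi k"
  unfolding Pi_def
  by (rule fact_lemma[of "\<lambda>i. y (int i)" "\<lambda>i. y' (int i)"]) (auto simp: injy injy' dyy')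

lemma shape_tau: "\<exists>\<kappa>. tau (Suc k) = smult \<kappa> (Pi k)"
proof -
  have "\<exists>q. degree q \<le> 0 \<and> tau (Suc k) = q * Pi k"
    using zeros_y[of _ "Suc k"] zeros_y'[of _ "Suc k"] deg_TS[of k]
    by (intro fact_inst) auto
  then obtain q where q: "degree q \<le> 0" "tau (Suc k) = q * Pi k" by blast
  have "q = [:coeff q 0:]" using q(1) by (metis degree_0_id le_zero_eq)
  then have "tau (Suc k) = [:coeff q 0:] * Pi k" using q(2) by metis
  then have "tau (Suc k) = smult (coeff q 0) (Pi k)" by simp
  then show ?thesis by blast
qed

lemma shape_Phi: "\<exists>q. degree q \<le> 1 \<and> Phi (Suc k) = [:-y' (-1), 1:] * (q * Pi k)"
proof (cases "Phi (Suc k) = 0")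
  case True
  then show ?thesis by (intro exI[of _ 0]) auto
next
  case False
  obtain P1 where P1: "Phi (Suc k) = [:-y' (-1), 1:] * P1"
    using Phi_ym1[of k] poly_eq_0_iff_dvd by (metis dvdE)
  have P1nz: "P1 \<noteq> 0" using False P1 by auto
  have "degree ([:-y' (-1), 1:] * P1) = 1 + degree P1" using P1nz by (subst degree_mult_eq) auto
  then have "degree (Phi (Suc k)) = 1 + degree P1" using P1 by simp
  then have dP1: "degree P1 \<le> 2*k + 1" using deg_Phi[of k] by simp
  have z: "\<forall>i<k. poly P1 (y (int i)) = 0 \<and> poly P1 (y' (int i)) = 0"
  proof (intro allI impI conjI)
    fix i assume i: "i < k"
    have "poly (Phi (Suc k)) (y (int i)) = 0" "poly (Phi (Suc k)) (y' (int i)) = 0"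
      unfolding Phi_def using zeros_y[of i "Suc k"] zeros_y'[of i "Suc k"] i by auto
    moreover have "y (int i) \<noteq> y' (-1)" "y' (int i) \<noteq> y' (-1)" using dyy' injy'[of "int i" "-1"] by auto
    ultimately show "poly P1 (y (int i)) = 0" "poly P1 (y' (int i)) = 0" using P1 by auto
  qed
  obtain q where "degree q \<le> 1" "P1 = q * Pi k" using fact_inst[OF z dP1] by blast
  then show ?thesis using P1 by blast
qed

definition kap :: "nat \<Rightarrow> complex" where
  "kap k = (SOME \<kappa>. tau (Suc k) = smult \<kappa> (Pi k))"
definition lq :: "nat \<Rightarrow> complex poly" where
  "lq k = (SOME q. degree q \<le> 1 \<and> Phi (Suc k) = [:-y' (-1), 1:] * (q * Pi k))"

lemma kap_spec: "tau (Suc k) = smult (kap k) (Pi k)"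
  unfolding kap_def using shape_tau[of k] by (rule someI_ex)
lemma lq_spec: "degree (lq k) \<le> 1 \<and> Phi (Suc k) = [:-y' (-1), 1:] * (lq k * Pi k)"
  unfolding lq_def using shape_Phi[of k] by (rule someI_ex)

lemma tau_eval: "poly (tau (Suc k)) z = kap k * poly (Pi k) z"
  using kap_spec[of k] by simp
lemma Phi_eval: "poly (Phi (Suc k)) z = (z - y' (-1)) * poly (lq k) z * poly (Pi k) z"
proof -
  have "Phi (Suc k) = [:-y' (-1), 1:] * (lq k * Pi k)" using lq_spec[of k] by blast
  then have "poly (Phi (Suc k)) z = poly [:-y' (-1), 1:] z * (poly (lq k) z * poly (Pi k) z)"
    by (simp only: poly_mult)
  then show ?thesis by (simp add: algebra_simps)
qed
lemma lq_lin: "poly (lq k) z = coeff (lq k) 0 + coeff (lq k) 1 * z"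
  using lq_spec[of k] poly_deg1 by blast

lemma kap0: "kap 0 = x 0 - x' 0"
proof -
  have "tau (Suc 0) = [:x 0 - x' 0:]" by (simp add: tau_Suc tau_0 Sp_0)
  moreover have "Pi 0 = 1" by (simp add: Pi_def)
  ultimately show ?thesis using kap_spec[of 0] by simp
qed

lemma kap_Suc: "kap (Suc k) * ((y' (-1) - y (int k)) * (y' (-1) - y' (int k))) =
   kap k * (poly (Yp C 2) (y' (-1)) * (x' (-1) - x' (int (Suc k))) * (x' 0 - x (int (Suc k))))"
proof -
  have "kap (Suc k) * (poly (Pi k) (y' (-1)) * ((y' (-1) - y (int k)) * (y' (-1) - y' (int k)))) =
        kap k * poly (Pi k) (y' (-1)) * (poly (Yp C 2) (y' (-1)) * (x' (-1) - x' (int (Suc k))) * (x' 0 - x (int (Suc k))))"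
    using V3[of k] unfolding tau_eval Pi_Suc .
  then show ?thesis using Pi_nz_m1[of k] cancel_mid by blast
qed

lemma ell_yk: "poly (lq k) (y (int k)) * (y (int k) - y' (-1)) =
   kap k * poly (Yp C 2) (y (int k)) * (1 - a * (x (int k + 1) - x (int k)) / 2)"
proof -
  have "(y (int k) - y' (-1)) * poly (lq k) (y (int k)) * poly (Pi k) (y (int k)) =
        kap k * poly (Pi k) (y (int k)) * poly (Yp C 2) (y (int k)) * (1 - a * (x (int k + 1) - x (int k)) / 2)"
    using V1[of k] unfolding tau_eval Phi_eval .
  then have "poly (Pi k) (y (int k)) * (poly (lq k) (y (int k)) * (y (int k) - y' (-1))) =
     poly (Pi k) (y (int k)) * (kap k * poly (Yp C 2) (y (int k)) * (1 - a * (x (int k + 1) - x (int k)) / 2))"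
    by (simp add: mult_ac)
  then show ?thesis using Pi_nz_y[of k k] by simp
qed

lemma ell_y'k: "poly (lq k) (y' (int k)) * (y' (int k) - y' (-1)) =
   kap k * poly (Yp C 2) (y' (int k)) * (1 + a * (x' (int k + 1) - x' (int k)) / 2)"
proof -
  have "(y' (int k) - y' (-1)) * poly (lq k) (y' (int k)) * poly (Pi k) (y' (int k)) =
        kap k * poly (Pi k) (y' (int k)) * poly (Yp C 2) (y' (int k)) * (1 + a * (x' (int k + 1) - x' (int k)) / 2)"
    using V2[of k] unfolding tau_eval Phi_eval .
  then have "poly (Pi k) (y' (int k)) * (poly (lq k) (y' (int k)) * (y' (int k) - y' (-1))) =
     poly (Pi k) (y' (int k)) * (kap k * poly (Yp C 2) (y' (int k)) * (1 + a * (x' (int k + 1) - x' (int k)) / 2))"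
    by (simp add: mult_ac)
  then show ?thesis using Pi_nz_y'[of k k] by simp
qed

end

lemma consist_alg:
  fixes la lb ka kb Ca Cb Xb X2p X2q Ywa Yvb Ywm P M dA dA' dB dC dD dD' dQz dQ0k dQt dE dF dG dH dI dQ0n dBn dIn dQ2n dHn dGn :: complex
  assumes hl0: "la * dA = ka * Ywa * P"
   and hl1: "lb * dB = kb * Yvb * M"
   and hk1: "kb * (dC * dA') = ka * (Ywm * dD' * dQz)"
   and hC2: "Cb * dQ0k = Ca * dQt * ((dE * P) / (dD * M))"
   and Ra: "Ywm * dE * dQ0n = X2p * dC * dBn"
   and Rb: "Ywa * dQ0k * dI = X2p * dF * dH"
   and Rc: "Yvb * dIn * dQ2n = X2q * dHn * dGn"
   and rel: "dA' = - dA" "dD' = - dD" "dQ0n = - dQz" "dBn = - dB" "dIn = - dI" "dQ2n = - dQt" "dHn = - dH" "dGn = - dG"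
   and nz: "dA \<noteq> 0" "dB \<noteq> 0" "dC \<noteq> 0" "dD \<noteq> 0" "dE \<noteq> 0" "dF \<noteq> 0" "dG \<noteq> 0" "dH \<noteq> 0" "dI \<noteq> 0"
      "dQ0k \<noteq> 0" "M \<noteq> 0" "Ywm \<noteq> 0" "Ywa \<noteq> 0" "Yvb \<noteq> 0" "Xb \<noteq> 0" "X2q \<noteq> 0" "X2p \<noteq> 0"
  shows "Ca * la / (Xb * dF) = Cb * lb / (Xb * X2q * dG)"
proof -
  have e1: "la = ka * Ywa * P / dA" using hl0 nz by (simp add: field_simps)
  have e2: "lb = kb * Yvb * M / dB" using hl1 nz by (simp add: field_simps)
  have e3: "kb = ka * (Ywm * dD' * dQz) / (dC * dA')" using hk1 nz rel by (simp add: field_simps)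
  have e4: "Cb = Ca * dQt * ((dE * P) / (dD * M)) / dQ0k" using hC2 nz by (simp add: field_simps)
  have e5: "dQz = X2p * dC * dB / (Ywm * dE)" using Ra nz rel by (simp add: field_simps)
  have e6: "dQ0k = X2p * dF * dH / (Ywa * dI)" using Rb nz by (simp add: field_simps)
  have e7: "dQt = X2q * dH * dG / (Yvb * dI)" using Rc nz rel by (simp add: field_simps)
  show ?thesis unfolding e1 e2 e3 e4 e5 e6 e7 rel using nz by (simp add: field_simps)
qed
lemma base_alg:
  fixes l k0 Y0 M0 dB0 dK dX1 dE0 dS a c0 C1 dKn dX1n X2q0 dF0 dF0n :: complex
  assumes hl: "l * dB0 = k0 * Y0 * M0" and hk: "k0 = dK"
    and hC: "C1 = dX1 / dE0 * ((dE0 * (1 + a * dS / 2)) / (dS * M0)) * c0"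
    and hS: "dS = 2 / a"
    and R: "Y0 * dKn * dX1n = X2q0 * dB0 * dF0n"
    and rel: "dKn = - dK" "dX1n = - dX1" "dF0n = - dF0"
    and nz: "a \<noteq> 0" "dB0 \<noteq> 0" "dE0 \<noteq> 0" "M0 \<noteq> 0" "X2q0 \<noteq> 0" "dF0 \<noteq> 0"
  shows "C1 * l / (X2q0 * dF0) = - a * c0"
proof -
  have e1: "l = dK * Y0 * M0 / dB0" using hl hk nz by (simp add: field_simps)
  have e2: "C1 = a * dX1 * c0 / M0" unfolding hC hS using nz by (simp add: field_simps)
  have e3: "Y0 * dK * dX1 = - X2q0 * dB0 * dF0" using R rel by (simp add: algebra_simps)
  have "C1 * l = a * c0 * (Y0 * dK * dX1) / dB0" unfolding e1 e2 using nz by (simp add: field_simps)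
  also have "\<dots> = - a * c0 * X2q0 * dF0" unfolding e3 using nz by (simp add: field_simps)
  finally show ?thesis using nz by (simp add: field_simps)
qed

context ctx
begin

definition eta :: "nat \<Rightarrow> complex" where
  "eta j = ((x (int j) - x' (-1)) * (1 + a * (x' (int j) - x' (int j - 1)) / 2)) /
           ((x' (int j) - x' (-1)) * (1 - a * (x (int j + 1) - x (int j)) / 2))"

definition Cc :: "complex \<Rightarrow> nat \<Rightarrow> complex" where
  "Cc c0 n = (x (int n) - x' (int n - 1)) / (x 0 - x' (-1)) * (\<Prod>j<n. eta j) * c0"

lemma x0m1: "x 0 - x' (-1) \<noteq> 0" using dxx'[of 0 "-1"] by simp

lemma Mnz: "1 - a * (x (int n + 1) - x (int n)) / 2 \<noteq> 0"
proof
  assume "1 - a * (x (int n + 1) - x (int n)) / 2 = 0"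
  then have "a * (x (int n + 1) - x (int n)) = 2" by (simp add: field_simps)
  then show False using ne2 by blast
qed

lemma Cc_0: "Cc c0 0 = c0"
  unfolding Cc_def using x0m1 by simp

lemma Cc_Suc: "Cc c0 (Suc n) * (x (int n) - x' (int n - 1)) = Cc c0 n * (x (int n + 1) - x' (int n)) * eta n"
proof -
  have i: "int (Suc n) = int n + 1" by simp
  show ?thesis unfolding Cc_def prod.lessThan_Suc i using x0m1 by (simp add: field_simps)
qed

definition Xb :: "nat \<Rightarrow> complex" where
  "Xb n = (\<Prod>i<n. X2 C (x' (int i)))"

lemma Xb_nz: "Xb n \<noteq> 0" unfolding Xb_def using X2x' by simp

lemma Xb_Suc: "Xb (Suc n) = Xb n * X2 C (x' (int n))" unfolding Xb_def by simp

definition Kf :: "complex \<Rightarrow> nat \<Rightarrow> complex" where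
  "Kf c0 k = Cc c0 (Suc k) * poly (lq k) (y (int k)) / (Xb (Suc k) * (y' (int k) - y (int k)))"
definition Kw :: "complex \<Rightarrow> nat \<Rightarrow> complex" where
  "Kw c0 k = Cc c0 (Suc k) * poly (lq k) (y' (int k)) / (Xb (Suc k) * (y' (int k) - y (int k)))"

lemma CR: "poly (Yp C 2) (y m) * (t - x m) * (t - x (m + 1)) = X2 C t' * (s - y' (n - 1)) * (s - y' n)"
  if "t = x' n" "t' = x' n" "s = y m" for t t' s m n
  using ellx[of t m] elly'[of n s] that Y2_eq by metis

lemma base: "Kf c0 0 = - a * c0"
proof -
  have R: "poly (Yp C 2) (y 0) * (x' 0 - x 0) * (x' 0 - x 1) = X2 C (x' 0) * (y 0 - y' (-1)) * (y 0 - y' 0)"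
    using CR[of "x' 0" 0 "x' 0" "y 0" 0] by simp
  have hl: "poly (lq 0) (y 0) * (y 0 - y' (-1)) = kap 0 * poly (Yp C 2) (y 0) * (1 - a * (x 1 - x 0) / 2)"
    using ell_yk[of 0] by simp
  have hC: "Cc c0 (Suc 0) = (x 1 - x' 0) / (x 0 - x' (-1)) *
     (((x 0 - x' (-1)) * (1 + a * (x' 0 - x' (-1)) / 2)) / ((x' 0 - x' (-1)) * (1 - a * (x 1 - x 0) / 2))) * c0"
    unfolding Cc_def eta_def by simp
  have M: "1 - a * (x 1 - x 0) / 2 \<noteq> 0" using Mnz[of 0] by simp
  have "Cc c0 (Suc 0) * poly (lq 0) (y 0) / (X2 C (x' 0) * (y' 0 - y 0)) = - a * c0"
    by (rule base_alg[OF hl kap0 hC step' R]) (use a_nz x0m1 M X2x' dyy'[of 0 0] dyy'[of 0 "-1"] in auto)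
  then show ?thesis unfolding Kf_def Xb_def by simp
qed

lemma consist: "Kw c0 k = Kf c0 (Suc k)"
proof -
  define K where "K = int k"
  define K1 where "K1 = int (Suc k)"
  have K1K: "K1 = K + 1" "K1 - 1 = K" unfolding K_def K1_def by auto
  have "Cc c0 (Suc k) * poly (lq k) (y' K) / (Xb (Suc k) * (y' K - y K)) =
        Cc c0 (Suc (Suc k)) * poly (lq (Suc k)) (y K1) / (Xb (Suc k) * X2 C (x' K1) * (y' K1 - y K1))"
  proof (rule consist_alg[where dA = "y' K - y' (-1)" and dA' = "y' (-1) - y' K" and dB = "y K1 - y' (-1)"
        and dC = "y' (-1) - y K" and dD = "x' K1 - x' (-1)" and dD' = "x' (-1) - x' K1" and dQz = "x' 0 - x K1"
        and dQ0k = "x K1 - x' K" and dQt = "x (K1 + 1) - x' K1" and dE = "x K1 - x' (-1)"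
        and dH = "y' K - y K1" and dI = "x K1 - x' K1" and dQ0n = "x K1 - x' 0" and dBn = "y' (-1) - y K1"
        and dIn = "x' K1 - x K1" and dQ2n = "x' K1 - x (K1 + 1)" and dHn = "y K1 - y' K" and dGn = "y K1 - y' K1"
        and ka = "kap k" and kb = "kap (Suc k)" and Ywa = "poly (Yp C 2) (y' K)" and Yvb = "poly (Yp C 2) (y K1)"
        and Ywm = "poly (Yp C 2) (y' (-1))" and X2p = "X2 C (x K1)"
        and P = "1 + a * (x' (K + 1) - x' K) / 2" and M = "1 - a * (x (K1 + 1) - x K1) / 2"])
    show "poly (lq k) (y' K) * (y' K - y' (-1)) = kap k * poly (Yp C 2) (y' K) * (1 + a * (x' (K + 1) - x' K) / 2)"
      using ell_y'k[of k] unfolding K_def .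
    show "poly (lq (Suc k)) (y K1) * (y K1 - y' (-1)) = kap (Suc k) * poly (Yp C 2) (y K1) * (1 - a * (x (K1 + 1) - x K1) / 2)"
      using ell_yk[of "Suc k"] unfolding K1_def .
    show "kap (Suc k) * ((y' (-1) - y K) * (y' (-1) - y' K)) = kap k * (poly (Yp C 2) (y' (-1)) * (x' (-1) - x' K1) * (x' 0 - x K1))"
      using kap_Suc[of k] unfolding K_def K1_def .
    have e: "eta (Suc k) = (x K1 - x' (-1)) * (1 + a * (x' (K + 1) - x' K) / 2) / ((x' K1 - x' (-1)) * (1 - a * (x (K1 + 1) - x K1) / 2))"
      unfolding eta_def K1_def[symmetric] by (simp add: K1K)
    show "Cc c0 (Suc (Suc k)) * (x K1 - x' K) = Cc c0 (Suc k) * (x (K1 + 1) - x' K1) *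
        ((x K1 - x' (-1)) * (1 + a * (x' (K + 1) - x' K) / 2) / ((x' K1 - x' (-1)) * (1 - a * (x (K1 + 1) - x K1) / 2)))"
      using Cc_Suc[of c0 "Suc k"] unfolding e K1_def[symmetric] by (simp add: K1K)
    show "poly (Yp C 2) (y' (-1)) * (x K1 - x' (-1)) * (x K1 - x' 0) = X2 C (x K1) * (y' (-1) - y K) * (y' (-1) - y K1)"
      using ellx'[of "x K1" "-1"] elly[of K1 "y' (-1)"] unfolding Y2_eq K1K by simp
    show "poly (Yp C 2) (y' K) * (x K1 - x' K) * (x K1 - x' K1) = X2 C (x K1) * (y' K - y K) * (y' K - y K1)"
      using ellx'[of "x K1" K] elly[of K1 "y' K"] unfolding Y2_eq K1K by simp
    show "poly (Yp C 2) (y K1) * (x' K1 - x K1) * (x' K1 - x (K1 + 1)) = X2 C (x' K1) * (y K1 - y' K) * (y K1 - y' K1)"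
      using ellx[of "x' K1" K1] elly'[of K1 "y K1"] unfolding Y2_eq K1K by simp
  qed (use Xb_nz X2x X2x' Y2y Y2y' Mnz[of "Suc k"] dxx' dyy' injx injx' injy injy' in
        \<open>auto simp: K_def K1_def dest: sym\<close>)
  then show ?thesis unfolding Kw_def Kf_def Xb_Suc[of "Suc k"] K_def K1_def .
qed

end

lemma term_alg: fixes G br d Ph e l A B X Cc Kw Kf f g :: complex
  assumes "G * br = d * Ph" "Ph = e * l * (A * B)" "G = X * (e * B) * (B * f)"
    "Cc * l = X * (Kw * g - Kf * f)" "X \<noteq> 0" "e \<noteq> 0" "B \<noteq> 0" "f \<noteq> 0"
  shows "Cc * br = d * (Kw * (A * g / (B * f)) - Kf * (A / B))"
proof -
  have G: "G \<noteq> 0" using assms(3,5-8) by simp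
  have "br = d * Ph / G" using assms(1) G by (simp add: field_simps)
  then have "Cc * br = d * (Cc * l) * A / (X * B * f)"
    using assms(2,3,5-8) by (simp add: field_simps)
  also have "\<dots> = d * (Kw * (A * g / (B * f)) - Kf * (A / B))"
    unfolding assms(4) using assms(5-8) by (simp add: field_simps)
  finally show ?thesis .
qed

lemma lin_alg: fixes Cc X D c0 c1 p q z :: complex
  assumes "X \<noteq> 0" "D \<noteq> 0" "q - p = D"
  shows "Cc * (c0 + c1 * z) = X * (Cc * (c0 + c1 * q) / (X * D) * (z - p) - Cc * (c0 + c1 * p) / (X * D) * (z - q))"
proof -
  have key: "(c0 + c1 * q) * (z - p) - (c0 + c1 * p) * (z - q) = (c0 + c1 * z) * D"
    unfolding assms(3)[symmetric] by (simp add: algebra_simps)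
  have "X * (Cc * (c0 + c1 * q) / (X * D) * (z - p) - Cc * (c0 + c1 * p) / (X * D) * (z - q)) =
        Cc * ((c0 + c1 * q) * (z - p) - (c0 + c1 * p) * (z - q)) / D"
    using assms(1,2) by (simp add: field_simps)
  also have "\<dots> = Cc * (c0 + c1 * z)" unfolding key using assms(2) by simp
  finally show ?thesis ..
qed

context ctx
begin

lemma lin: "Cc c0 (Suc k) * poly (lq k) z = Xb (Suc k) * (Kw c0 k * (z - y (int k)) - Kf c0 k * (z - y' (int k)))"
proof -
  have d: "y' (int k) - y (int k) \<noteq> 0" using dyy'[of "int k" "int k"] by simp
  show ?thesis unfolding Kw_def Kf_def lq_lin[of k z] lq_lin[of k "y (int k)"] lq_lin[of k "y' (int k)"]
    by (rule lin_alg[OF Xb_nz d refl])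
qed

definition rr :: "nat \<Rightarrow> complex \<Rightarrow> complex" where
  "rr n t = (\<Prod>i<n. (t - x (int i)) / (t - x' (int i)))"
definition ss :: "nat \<Rightarrow> complex \<Rightarrow> complex" where
  "ss n z = (\<Prod>i<n. (z - y (int i)) / (z - y' (int i)))"
definition KK :: "complex \<Rightarrow> nat \<Rightarrow> complex" where
  "KK c0 n = (case n of 0 \<Rightarrow> 0 | Suc k \<Rightarrow> Kf c0 k)"

lemma term_id:
  fixes m :: int
  defines "d \<equiv> x (m + 1) - x m"
  shows "Cc c0 n * ((1 - a * d / 2) * rr n (x (m + 1)) - (1 + a * d / 2) * rr n (x m)) =
         d * (KK c0 (Suc n) * ss n (y m) - KK c0 n * ss (n - 1) (y m))"
proof (cases n)
  case 0
  then show ?thesis unfolding rr_def ss_def KK_def using base[of c0] Cc_0[of c0]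
    by (simp add: algebra_simps)
next
  case (Suc k)
  define u where "u = x m"
  define v where "v = x (m + 1)"
  define z where "z = y m"
  define Y where "Y = poly (Yp C 2) z"
  define w where "w = Y * d / 2"
  define t where "t = poly (tau n) z"
  define S where "S = poly (Sp n) z"
  define G where "G = (\<Prod>i<n. Y * (u - x' (int i)) * (v - x' (int i)))"
  have e1: "S + t * w = (\<Prod>i<n. Y * (u - x' (int i)) * (v - x (int i)))"
    using ev_y[of n m] unfolding S_def t_def w_def Y_def u_def v_def z_def d_def by (simp add: mult_ac)
  have e2: "S - t * w = (\<Prod>i<n. Y * (v - x' (int i)) * (u - x (int i)))"
    using ev_y_sw[of n m] unfolding S_def t_def w_def Y_def u_def v_def z_def d_def by (simp add: mult_ac)
  have vne: "v - x' (int i) \<noteq> 0" "u - x' (int i) \<noteq> 0" for i using dxx' unfolding u_def v_def by auto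
  have e3: "(\<Prod>i<n. Y * (u - x' (int i)) * (v - x (int i))) = G * rr n v"
    unfolding G_def rr_def prod.distrib[symmetric] using vne by (intro prod.cong refl) (simp add: field_simps)
  have e4: "(\<Prod>i<n. Y * (v - x' (int i)) * (u - x (int i))) = G * rr n u"
    unfolding G_def rr_def prod.distrib[symmetric] using vne by (intro prod.cong refl) (simp add: field_simps)
  have e5: "G * ((1 - a * d / 2) * rr n v - (1 + a * d / 2) * rr n u) = d * poly (Phi n) z"
  proof -
    have "G * ((1 - a * d / 2) * rr n v - (1 + a * d / 2) * rr n u) =
          (1 - a * d / 2) * (S + t * w) - (1 + a * d / 2) * (S - t * w)"
      unfolding e1 e2 e3 e4 by (simp add: algebra_simps)
    also have "\<dots> = d * (Y * t - a * S)" unfolding w_def by (simp add: field_simps)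
    also have "\<dots> = d * poly (Phi n) z" unfolding Phi_def Y_def t_def S_def by simp
    finally show ?thesis .
  qed
  define A where "A = (\<Prod>i<k. z - y (int i))"
  define B where "B = (\<Prod>i<k. z - y' (int i))"
  have e6: "poly (Phi n) z = (z - y' (-1)) * poly (lq k) z * (A * B)"
    unfolding Suc Phi_eval poly_Pi A_def B_def prod.distrib by simp
  have e7: "G = Xb n * ((z - y' (-1)) * B) * (B * (z - y' (int k)))"
  proof -
    have f: "Y * (u - x' (int i)) * (v - x' (int i)) = X2 C (x' (int i)) * (z - y' (int i - 1)) * (z - y' (int i))" for i
      using CR[of "x' (int i)" "int i" "x' (int i)" z m] unfolding Y_def u_def v_def z_def
      by (simp add: algebra_simps)
    have "G = (\<Prod>i<n. X2 C (x' (int i))) * (\<Prod>i<n. z - y' (int i - 1)) * (\<Prod>i<n. z - y' (int i))"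
      unfolding G_def f prod.distrib ..
    also have "(\<Prod>i<n. z - y' (int i - 1)) = (z - y' (-1)) * B"
      unfolding Suc prod.lessThan_Suc_shift B_def by simp
    also have "(\<Prod>i<n. z - y' (int i)) = B * (z - y' (int k))"
      unfolding Suc B_def by simp
    finally show ?thesis unfolding Xb_def .
  qed
  have e8: "ss (Suc k) z = A * (z - y (int k)) / (B * (z - y' (int k)))" "ss k z = A / B"
    unfolding ss_def A_def B_def prod_dividef by simp_all
  have K: "KK c0 (Suc (Suc k)) = Kw c0 k" "KK c0 (Suc k) = Kf c0 k" unfolding KK_def using consist by simp_all
  have nz: "z - y' (-1) \<noteq> 0" "B \<noteq> 0" "z - y' (int k) \<noteq> 0"
    unfolding z_def B_def using dyy' by auto
  have "Cc c0 (Suc k) * ((1 - a * d / 2) * rr (Suc k) v - (1 + a * d / 2) * rr (Suc k) u) =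
        d * (Kw c0 k * ss (Suc k) z - Kf c0 k * ss k z)"
    unfolding e8 by (rule term_alg[OF e5[unfolded Suc] e6[unfolded Suc] e7[unfolded Suc] lin Xb_nz nz])
  then show ?thesis unfolding Suc K diff_Suc_1 u_def v_def z_def .
qed

lemma Esum:
  fixes m :: nat
  defines "d \<equiv> x (int m + 1) - x (int m)"
  shows "(\<Sum>n<Suc (Suc m). Cc c0 n * ((1 - a * d / 2) * rr n (x (int m + 1)) - (1 + a * d / 2) * rr n (x (int m)))) = 0"
proof -
  define h where "h n = KK c0 n * ss (n - 1) (y (int m))" for n
  have "(\<Sum>n<Suc (Suc m). Cc c0 n * ((1 - a * d / 2) * rr n (x (int m + 1)) - (1 + a * d / 2) * rr n (x (int m)))) =
        (\<Sum>n<Suc (Suc m). d * (h (Suc n) - h n))"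
    unfolding d_def h_def by (intro sum.cong refl) (simp add: term_id)
  also have "\<dots> = d * (h (Suc (Suc m)) - h 0)"
    unfolding sum_distrib_left[symmetric] sum_lessThan_telescope ..
  also have "h 0 = 0" unfolding h_def KK_def by simp
  also have "h (Suc (Suc m)) = 0"
  proof -
    have "ss (Suc m) (y (int m)) = 0" unfolding ss_def by (rule prod_zero_at[of _ m]) auto
    then show ?thesis unfolding h_def by simp
  qed
  finally show ?thesis by simp
qed

lemma rr_nz: "rr n (x (int n)) \<noteq> 0"
  unfolding rr_def using dxx' by (auto simp: injx)

lemma rr_zero: "rr (Suc m) (x (int m)) = 0"
  unfolding rr_def by (rule prod_zero_at[of _ m]) auto

lemma main_loc:
  fixes f :: "complex \<Rightarrow> complex" and c :: "nat \<Rightarrow> complex"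
  assumes feq: "\<And>n::nat. Dop x f (int n) = a * Mop x f (int n)"
    and interp: "\<And>N k::nat. k \<le> N \<Longrightarrow>
        (\<Sum>n\<le>N. c n * (\<Prod>i<n. (x (int k) - x (int i)) / (x (int k) - x' (int i)))) = f (x (int k))"
  shows "\<forall>n. c n = Cc (c 0) n"
proof -
  define c0 where "c0 = c 0"
  have interp': "(\<Sum>n\<le>N. c n * rr n (x (int k))) = f (x (int k))" if "k \<le> N" for N k
    using interp[OF that] unfolding rr_def .
  have c0f: "c0 = f (x 0)" using interp'[of 0 0] unfolding c0_def rr_def by simp
  have g: "(\<Sum>n\<le>m. Cc c0 n * rr n (x (int m))) = f (x (int m))" for m
  proof (induction m)
    case 0
    then show ?case using c0f Cc_0[of c0] unfolding rr_def by simp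
  next
    case (Suc m)
    define u where "u = x (int m)"
    define v where "v = x (int m + 1)"
    define d where "d = v - u"
    have dnz: "d \<noteq> 0" unfolding d_def u_def v_def using injx[of "int m + 1" "int m"] by simp
    have E: "(\<Sum>n<Suc (Suc m). Cc c0 n * ((1 - a * d / 2) * rr n v - (1 + a * d / 2) * rr n u)) = 0"
      using Esum[of c0 m] unfolding d_def u_def v_def .
    have split: "(\<Sum>n<Suc (Suc m). Cc c0 n * ((1 - a * d / 2) * rr n v - (1 + a * d / 2) * rr n u)) =
       (1 - a * d / 2) * (\<Sum>n<Suc (Suc m). Cc c0 n * rr n v) - (1 + a * d / 2) * (\<Sum>n<Suc (Suc m). Cc c0 n * rr n u)"
    proof -
      have "(\<Sum>n<Suc (Suc m). Cc c0 n * ((1 - a * d / 2) * rr n v - (1 + a * d / 2) * rr n u)) =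
            (\<Sum>n<Suc (Suc m). (1 - a * d / 2) * (Cc c0 n * rr n v) - (1 + a * d / 2) * (Cc c0 n * rr n u))"
        by (intro sum.cong refl) (simp add: algebra_simps)
      also have "\<dots> = (1 - a * d / 2) * (\<Sum>n<Suc (Suc m). Cc c0 n * rr n v) - (1 + a * d / 2) * (\<Sum>n<Suc (Suc m). Cc c0 n * rr n u)"
        by (simp only: sum_subtractf sum_distrib_left)
      finally show ?thesis .
    qed
    have S2: "(\<Sum>n<Suc (Suc m). Cc c0 n * rr n u) = f u"
      using Suc.IH rr_zero[of m] unfolding u_def by (simp add: lessThan_Suc_atMost)
    have iS: "int (Suc m) = int m + 1" by simp
    have S1: "(\<Sum>n<Suc (Suc m). Cc c0 n * rr n v) = (\<Sum>n\<le>Suc m. Cc c0 n * rr n (x (int (Suc m))))"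
      unfolding v_def lessThan_Suc_atMost iS ..
    have fr: "(1 - a * d / 2) * f v = (1 + a * d / 2) * f u"
    proof -
      have "(f v - f u) / d = a * ((f u + f v) / 2)"
        using feq[of m] unfolding Dop_def Mop_def d_def u_def v_def .
      then show ?thesis using dnz by (simp add: field_simps)
    qed
    have M: "1 - a * d / 2 \<noteq> 0" using Mnz[of m] unfolding d_def u_def v_def .
    have "(1 - a * d / 2) * (\<Sum>n<Suc (Suc m). Cc c0 n * rr n v) = (1 - a * d / 2) * f v"
      using E split S2 fr by simp
    then have eqv: "(\<Sum>n<Suc (Suc m). Cc c0 n * rr n v) = f v" using M by simp
    have xv: "x (int (Suc m)) = v" unfolding v_def iS ..
    show ?case unfolding xv using trans[OF sym[OF S1[unfolded xv]] eqv] .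
  qed
  show ?thesis
  proof
    fix n
    show "c n = Cc (c 0) n"
    proof (induction n rule: less_induct)
      case (less n)
      show ?case
      proof (cases n)
        case 0
        then show ?thesis using Cc_0[of "c 0"] by simp
      next
        case (Suc n')
        have eq: "(\<Sum>j\<le>n. c j * rr j (x (int n))) = (\<Sum>j\<le>n. Cc c0 j * rr j (x (int n)))"
          using interp'[of n n] g[of n] by simp
        have IH: "c j = Cc c0 j" if "j \<le> n'" for j
        proof -
          have "j < n" using that Suc by simp
          then show ?thesis using less.IH[of j] unfolding c0_def by blast
        qed
        have "(\<Sum>j\<le>n'. c j * rr j (x (int n))) = (\<Sum>j\<le>n'. Cc c0 j * rr j (x (int n)))"
          using IH by (intro sum.cong refl) simp
        then have "c n * rr n (x (int n)) = Cc c0 n * rr n (x (int n))"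
          using eq unfolding Suc by simp
        then show ?thesis using rr_nz[of n] unfolding c0_def by simp
      qed
    qed
  qed
qed

end

theorem mainTheorem10:
  fixes C :: "nat \<Rightarrow> nat \<Rightarrow> complex"
    and x y x' y' :: "int \<Rightarrow> complex"
    and a :: complex and f :: "complex \<Rightarrow> complex" and c :: "nat \<Rightarrow> complex"
  assumes ell: "elliptic_seq C x y" and ell': "elliptic_seq C x' y'"
    and gp: "general_position C x y x' y'"
    and a_nz: "a \<noteq> 0"
    and step': "x' 0 - x' (-1) = 2 / a"
    and f0: "f (x 0) \<noteq> 0"
    and ne2: "\<And>n::nat. a * (x (int n + 1) - x (int n)) \<noteq> 2"
    and feq: "\<And>n::nat. Dop x f (int n) = a * Mop x f (int n)"
    and interp: "\<And>N k::nat. k \<le> N \<Longrightarrow>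
        (\<Sum>n\<le>N. c n * (\<Prod>i<n. (x (int k) - x (int i)) / (x (int k) - x' (int i)))) = f (x (int k))"
  shows "\<forall>n::nat. c n =
           (x (int n) - x' (int n - 1)) / (x 0 - x' (-1)) *
           (\<Prod>j<n. ((x (int j) - x' (-1)) * (1 + a * (x' (int j) - x' (int j - 1)) / 2)) /
                     ((x' (int j) - x' (-1)) * (1 - a * (x (int j + 1) - x (int j)) / 2))) * c 0"
proof -
  interpret ctx C x y x' y' a
    using ell ell' gp a_nz step' ne2 by (rule ctx.intro)
  have "\<forall>n. c n = Cc (c 0) n" by (rule main_loc[OF feq interp])
  then show ?thesis unfolding Cc_def eta_def .
qed

end
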